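(* Let $s$ be a Sturmian word having a factorization $s=U_1U_2\cdots U_n\cdots$ where each $U_i$ ($i\ge1$) is a non-empty prefix of $s$, and let $c$ be the first letter of $s$. Then $U_1\neq c^p$ for every integer $p\ge 1$.
   Context: A Sturmian word is an infinite word $s\in\{a,b\}^{\omega}$ that is aperiodic (not ultimately periodic) and balanced: for all factors $u,v$ of $s$ with $|u|=|v|$ one has $||u|_x-|v|_x|\le 1$ for $x\in\{a,b\}$, where $|u|_x$ is the number of occurrences of $x$ in $u$. *)

theory Defs
  imports Main
begin

text \<open>Infinite words over the two-letter alphabet {a,b}, represented by type bool
  (a = True, b = False), as functions nat => bool.\<close>

type_synonym iword = "nat \<Rightarrow> bool"

definition factor :: "iword \<Rightarrow> nat \<Rightarrow> nat \<Rightarrow> bool list" where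
  "factor s i n = map s [i..<i+n]"

definition occ :: "bool list \<Rightarrow> bool \<Rightarrow> nat" where
  "occ u x = length (filter (\<lambda>y. y = x) u)"

definition ultimately_periodic :: "iword \<Rightarrow> bool" where
  "ultimately_periodic s \<longleftrightarrow> (\<exists>p N. p > 0 \<and> (\<forall>n\<ge>N. s (n + p) = s n))"

definition balanced :: "iword \<Rightarrow> bool" where
  "balanced s \<longleftrightarrow> (\<forall>i j n x. \<bar>int (occ (factor s i n) x) - int (occ (factor s j n) x)\<bar> \<le> 1)"

definition sturmian :: "iword \<Rightarrow> bool" where
  "sturmian s \<longleftrightarrow> \<not> ultimately_periodic s \<and> balanced s"

definition is_prefix_of :: "bool list \<Rightarrow> iword \<Rightarrow> bool" where
  "is_prefix_of u s \<longleftrightarrow> (\<forall>j<length u. u ! j = s j)"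

definition blockpos :: "(nat \<Rightarrow> bool list) \<Rightarrow> nat \<Rightarrow> nat" where
  "blockpos U i = (\<Sum>k<i. length (U k))"

text \<open>s = U 0 U 1 U 2 ... (all blocks non-empty, so the concatenation is infinite).\<close>
definition is_factorization :: "iword \<Rightarrow> (nat \<Rightarrow> bool list) \<Rightarrow> bool" where
  "is_factorization s U \<longleftrightarrow> (\<forall>i. U i \<noteq> []) \<and>
     (\<forall>i j. j < length (U i) \<longrightarrow> s (blockpos U i + j) = U i ! j)"

end

theory Submission
  imports Defs
begin

lemma blockpos_Suc: "blockpos U (Suc i) = blockpos U i + length (U i)"
  by (simp add: blockpos_def)

lemma blockpos_ge: "\<forall>i. U i \<noteq> [] \<Longrightarrow> blockpos U i \<ge> i"
proof (induction i)
  case 0 then show ?case by simp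
next
  case (Suc i)
  then have "length (U i) \<ge> 1" by (simp add: Suc_le_eq)
  with Suc show ?case by (simp add: blockpos_Suc)
qed

lemma find_block:
  assumes "\<forall>i. U i \<noteq> []"
  shows "\<exists>i. blockpos U i \<le> n \<and> n < blockpos U i + length (U i)"
proof -
  have ex: "\<exists>k. n < blockpos U k" using blockpos_ge[OF assms, of "Suc n"] by (intro exI[of _ "Suc n"]) simp
  define k where "k = (LEAST k. n < blockpos U k)"
  have k1: "n < blockpos U k" unfolding k_def by (rule LeastI_ex[OF ex])
  have k0: "k \<noteq> 0" using k1 by (cases k) (auto simp: blockpos_def)
  then obtain i where ki: "k = Suc i" by (cases k) auto
  have "\<not> n < blockpos U i" using not_less_Least[of i "\<lambda>k. n < blockpos U k"] unfolding k_def[symmetric] using ki by simp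
  then show ?thesis using k1 ki by (intro exI[of _ i]) (simp add: blockpos_Suc)
qed

theorem mainTheorem4:
  fixes s :: iword and U :: "nat \<Rightarrow> bool list"
  assumes "sturmian s"
    and "is_factorization s U"
    and "\<forall>i. is_prefix_of (U i) s"
  shows "\<forall>p::nat. p \<ge> 1 \<longrightarrow> U 0 \<noteq> replicate p (s 0)"
proof (intro allI impI notI)
  fix p :: nat
  assume p: "p \<ge> 1" and U0: "U 0 = replicate p (s 0)"
  have ne: "\<forall>i. U i \<noteq> []" and fac: "\<forall>i j. j < length (U i) \<longrightarrow> s (blockpos U i + j) = U i ! j"
    using assms(2) by (auto simp: is_factorization_def)
  have const: "s n = s 0" for n
  proof (induction n rule: less_induct)
    case (less n)
    obtain i where i: "blockpos U i \<le> n" "n < blockpos U i + length (U i)"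
      using find_block[OF ne] by blast
    show ?case
    proof (cases i)
      case 0
      then have "n < p" using i U0 by (simp add: blockpos_def)
      then show ?thesis using fac[rule_format, of n 0] U0 by (simp add: blockpos_def)
    next
      case (Suc i')
      have "blockpos U i \<ge> p"
      proof -
        have "blockpos U i = blockpos U (Suc i')" using Suc by simp
        also have "\<dots> \<ge> blockpos U 1"
          unfolding blockpos_def by (rule sum_mono2) auto
        finally show ?thesis using U0 by (simp add: blockpos_def)
      qed
      define j where "j = n - blockpos U i"
      have j: "j < length (U i)" "n = blockpos U i + j" using i unfolding j_def by auto
      have "s n = U i ! j" using fac j by simp
      also have "\<dots> = s j" using assms(3) j(1) by (simp add: is_prefix_of_def)
      also have "\<dots> = s 0" using less.IH[of j] j p \<open>blockpos U i \<ge> p\<close> by linarith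
      finally show ?thesis .
    qed
  qed
  have "ultimately_periodic s" unfolding ultimately_periodic_def
  proof (intro exI[of _ 1] exI[of _ 0] conjI allI impI)
    fix n :: nat
    show "s (n + 1) = s n" using const[of "n+1"] const[of n] by simp
  qed simp
  then show False using assms(1) by (simp add: sturmian_def)
qed

end
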